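(* Let $g_1,\dots,g_m$ be holomorphic functions of $z=(z_1,z_2)$, where $z_1,z_2$ are complex sub-vectors, satisfying $g_j(\zeta z_1,\zeta^{-1}z_2)=g_j(z_1,z_2)$ for all $\zeta\in\mathbb C\setminus\{0\}$ and all $j$, and let $f=\sum_{j=1}^m|g_j|^2$. Then at every point $z$ the vector $\xi=\begin{pmatrix}z_1\\-z_2\end{pmatrix}$ is orthogonal (w.r.t. $\langle u,v\rangle=u^*v$) to the Wirtinger gradient $\frac{\partial f}{\partial\bar z}$ and lies in the kernel of the mixed Wirtinger Hessian $\frac{\partial^2f}{\partial\bar z\partial z}$. In particular, if $\xi\ne0$, the mixed Hessian is singular.
   Context: Wirtinger derivatives: $\frac{\partial}{\partial z}=\frac12(\frac{\partial}{\partial\mathrm{Re}\,z}-i\frac{\partial}{\partial\mathrm{Im}\,z})$, $\frac{\partial}{\partial\bar z}=\frac12(\frac{\partial}{\partial\mathrm{Re}\,z}+i\frac{\partial}{\partial\mathrm{Im}\,z})$ componentwise; for $f=\sum|g_j|^2$ one has $\frac{\partial f}{\partial\bar z}=\sum_j g_j\overline{g_j'}$ and $\frac{\partial^2 f}{\partial\bar z\partial z}=\sum_j\overline{g_j'}(g_j')^T$. *)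

theory Defs
  imports "HOL-Analysis.Analysis"
begin

definition holomorphic_several :: "(complex^'n \<Rightarrow> complex) \<Rightarrow> bool" where
  "holomorphic_several g \<longleftrightarrow>
     (\<forall>z. \<exists>c::complex^'n. (g has_derivative (\<lambda>h. \<Sum>k\<in>UNIV. c $ k * h $ k)) (at z))"

definition partial_re :: "(complex^'n \<Rightarrow> complex) \<Rightarrow> 'n \<Rightarrow> complex^'n \<Rightarrow> complex" where
  "partial_re f k z = vector_derivative (\<lambda>t::real. f (z + t *\<^sub>R axis k 1)) (at 0)"

definition partial_im :: "(complex^'n \<Rightarrow> complex) \<Rightarrow> 'n \<Rightarrow> complex^'n \<Rightarrow> complex" where
  "partial_im f k z = vector_derivative (\<lambda>t::real. f (z + t *\<^sub>R axis k \<i>)) (at 0)"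

definition wirt_z :: "(complex^'n \<Rightarrow> complex) \<Rightarrow> 'n \<Rightarrow> complex^'n \<Rightarrow> complex" where
  "wirt_z f k z = (partial_re f k z - \<i> * partial_im f k z) / 2"

definition wirt_zbar :: "(complex^'n \<Rightarrow> complex) \<Rightarrow> 'n \<Rightarrow> complex^'n \<Rightarrow> complex" where
  "wirt_zbar f k z = (partial_re f k z + \<i> * partial_im f k z) / 2"

definition wgrad_zbar :: "(complex^'n \<Rightarrow> complex) \<Rightarrow> complex^'n \<Rightarrow> complex^'n" where
  "wgrad_zbar f z = (\<chi> k. wirt_zbar f k z)"

definition mixed_hessian :: "(complex^'n \<Rightarrow> complex) \<Rightarrow> complex^'n \<Rightarrow> complex^'n^'n" where
  "mixed_hessian f z = (\<chi> k l. wirt_zbar (\<lambda>w. wirt_z f l w) k z)"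

definition herm_inner :: "complex^'n \<Rightarrow> complex^'n \<Rightarrow> complex" where
  "herm_inner u v = (\<Sum>k\<in>UNIV. cnj (u $ k) * v $ k)"

text \<open>The coordinates in A form z_1, the remaining ones form z_2.
  Action zeta.(z1,z2) = (zeta z1, zeta^-1 z2) and the vector xi = (z1, -z2).\<close>
definition torus_act :: "'n set \<Rightarrow> complex \<Rightarrow> complex^'n \<Rightarrow> complex^'n" where
  "torus_act A \<zeta> z = (\<chi> k. if k \<in> A then \<zeta> * z $ k else z $ k / \<zeta>)"

definition xi_vec :: "'n set \<Rightarrow> complex^'n \<Rightarrow> complex^'n" where
  "xi_vec A z = (\<chi> k. if k \<in> A then z $ k else - z $ k)"

end

theory Submission
  imports Defs "HOL-Complex_Analysis.Cauchy_Integral_Formula"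
begin

lemma bounded_linear_axis: "bounded_linear (axis i :: 'a::real_normed_vector \<Rightarrow> 'a^'n)"
proof (rule bounded_linear_intro[where K=1])
  fix x y :: 'a and r :: real
  show "axis i (x + y) = (axis i x + axis i y :: 'a^'n)" by (simp add: vec_eq_iff axis_def)
  show "axis i (r *\<^sub>R x) = (r *\<^sub>R axis i x :: 'a^'n)" by (simp add: vec_eq_iff axis_def)
  have "norm (axis i x :: 'a^'n) = norm x"
    by (simp add: norm_vec_def L2_set_def axis_def if_distrib[of "\<lambda>y. y ^ 2"] if_distrib[of norm] cong: if_cong)
  then show "norm (axis i x :: 'a^'n) \<le> norm x * 1" by simp
qed

lemma vec_sum_axis: "(x :: 'a::real_normed_vector^'n) = (\<Sum>i\<in>UNIV. axis i (x $ i))"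
  by (simp add: vec_eq_iff axis_def sum_component if_distrib cong: if_cong)

lemma has_derivative_vec_lambda:
  assumes "\<And>i. ((\<lambda>x. f x $ i) has_derivative (\<lambda>h. f' h $ i)) F"
  shows "((f :: _ \<Rightarrow> 'a::real_normed_vector^'n) has_derivative f') F"
proof -
  have "((\<lambda>x. \<Sum>i\<in>UNIV. axis i (f x $ i)) has_derivative (\<lambda>h. \<Sum>i\<in>UNIV. axis i (f' h $ i))) F"
    by (intro has_derivative_sum bounded_linear.has_derivative[OF bounded_linear_axis] assms)
  then show ?thesis by (subst (asm) (1 2) vec_sum_axis[symmetric])
qed

lemma chain_vec:
  fixes g :: "complex^'n \<Rightarrow> complex" and \<gamma> :: "complex \<Rightarrow> complex^'n"
  assumes g: "(g has_derivative (\<lambda>h. \<Sum>k\<in>UNIV. c k * h$k)) (at (\<gamma> x))"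
    and d: "\<And>i. ((\<lambda>s. \<gamma> s $ i) has_field_derivative d i) (at x)"
  shows "((\<lambda>s. g (\<gamma> s)) has_field_derivative (\<Sum>k\<in>UNIV. c k * d k)) (at x)"
proof -
  have "(\<gamma> has_derivative (\<lambda>h. \<chi> i. d i * h)) (at x)"
    by (rule has_derivative_vec_lambda) (use d in \<open>simp add: has_field_derivative_def\<close>)
  from diff_chain_at[OF this g] have "((\<lambda>s. g (\<gamma> s)) has_derivative (\<lambda>h. \<Sum>k\<in>UNIV. c k * (d k * h))) (at x)"
    by (simp add: o_def)
  moreover have "(\<lambda>h. \<Sum>k\<in>UNIV. c k * (d k * h)) = (*) (\<Sum>k\<in>UNIV. c k * d k)"
    by (simp add: fun_eq_iff sum_distrib_left mult_ac)
  ultimately show ?thesis by (simp add: has_field_derivative_def)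
qed

definition pd :: "(complex^'n \<Rightarrow> complex) \<Rightarrow> 'n \<Rightarrow> complex^'n \<Rightarrow> complex" where
  "pd g k w = deriv (\<lambda>s. g (w + axis k s)) 0"

lemma axis_zero0: "axis k 0 = (0::'a::zero^'n)"
  by (simp add: vec_eq_iff axis_def)

lemma axis_line_deriv:
  "((\<lambda>s. (w + axis k s) $ i) has_field_derivative (if i = k then 1 else 0)) (at x)"
  by (auto simp: axis_def intro!: derivative_eq_intros)

lemma hs_pd:
  assumes "holomorphic_several g"
  shows "(g has_derivative (\<lambda>h. \<Sum>k\<in>UNIV. pd g k w * h$k)) (at w)"
proof -
  obtain c where c: "(g has_derivative (\<lambda>h. \<Sum>k\<in>UNIV. c $ k * h $ k)) (at w)"
    using assms unfolding holomorphic_several_def by blast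
  have "c $ k = pd g k w" for k
  proof -
    have "((\<lambda>s. g (w + axis k s)) has_field_derivative (\<Sum>i\<in>UNIV. c$i * (if i = k then 1 else 0))) (at 0)"
      using chain_vec[where \<gamma>="\<lambda>s. w + axis k s" and x=0 and c="($) c", OF _ axis_line_deriv] c by (simp add: axis_zero0)
    then show ?thesis unfolding pd_def by (simp add: DERIV_imp_deriv if_distrib cong: if_cong)
  qed
  then show ?thesis using c by simp
qed

lemma line_deriv:
  assumes "holomorphic_several g"
  shows "((\<lambda>s. g (w + axis k s)) has_field_derivative pd g k (w + axis k s0)) (at s0)"
proof -
  have "((\<lambda>s. g (w + axis k s)) has_field_derivative (\<Sum>i\<in>UNIV. pd g i (w + axis k s0) * (if i = k then 1 else 0))) (at s0)"
    using chain_vec[where \<gamma>="\<lambda>s. w + axis k s" and x=s0 and c="\<lambda>i. pd g i (w + axis k s0)", OF hs_pd[OF assms] axis_line_deriv] by simp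
  then show ?thesis by (simp add: if_distrib cong: if_cong)
qed

lemma circ_deriv:
  assumes hol: "F holomorphic_on UNIV"
  shows "deriv F w = integral {0..1} (\<lambda>t. F (w + exp (2 * of_real pi * \<i> * of_real t)) / exp (2 * of_real pi * \<i> * of_real t))"
proof -
  define E where "E = (\<lambda>t::real. exp (2 * of_real pi * \<i> * of_real t))"
  have E0: "E t \<noteq> 0" for t by (simp add: E_def)
  have "(F has_field_derivative (1 / (2 * of_real pi * \<i>) * contour_integral (circlepath w 1) (\<lambda>u. F u / (u-w)^2))) (at w)"
    by (rule Cauchy_derivative_integral_circlepath(2))
       (use hol in \<open>auto intro: holomorphic_on_imp_continuous_on holomorphic_on_subset\<close>)
  then have "deriv F w = 1 / (2 * of_real pi * \<i>) * contour_integral (circlepath w 1) (\<lambda>u. F u / (u-w)^2)"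
    by (rule DERIV_imp_deriv)
  also have "contour_integral (circlepath w 1) (\<lambda>u. F u / (u-w)^2)
      = integral {0..1} (\<lambda>t. F (w + E t) / (E t)^2 * (2 * of_real pi * \<i> * E t))"
    unfolding contour_integral_integral vector_derivative_circlepath by (simp add: circlepath E_def)
  also have "\<dots> = integral {0..1} (\<lambda>t. (2 * of_real pi * \<i>) * (F (w + E t) / E t))"
    by (rule integral_cong) (use E0 in \<open>simp add: field_simps power2_eq_square\<close>)
  also have "\<dots> = (2 * of_real pi * \<i>) * integral {0..1} (\<lambda>t. F (w + E t) / E t)"
    by (rule integral_mult_right)
  finally show ?thesis unfolding E_def by simp
qed

lemma osgood:
  fixes G :: "complex \<Rightarrow> complex \<Rightarrow> complex"
  assumes cont: "continuous_on UNIV (\<lambda>p. G (fst p) (snd p))"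
    and h1: "\<And>u. (\<lambda>s. G s u) holomorphic_on UNIV"
    and h2: "\<And>s. (\<lambda>u. G s u) holomorphic_on UNIV"
  shows "(\<lambda>s. deriv (\<lambda>u. G s u) 0) holomorphic_on UNIV"
proof -
  define E where "E = (\<lambda>t::real. exp (2 * of_real pi * \<i> * of_real t))"
  have E0: "E t \<noteq> 0" for t by (simp add: E_def)
  have contE: "continuous_on A (\<lambda>x. E (f x))" if "continuous_on A f" for A and f :: "'z::topological_space \<Rightarrow> real"
    using that by (auto simp: E_def intro!: continuous_intros)
  define Ds where "Ds = (\<lambda>p::complex\<times>complex. integral (cbox 0 1) (\<lambda>t::real. G (fst p + E t) (snd p) / E t))"
  have Ds_eq: "deriv (\<lambda>s. G s u) s = Ds (s, u)" for s u
    using circ_deriv[OF h1[of u], of s] by (simp add: Ds_def E_def)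
  have cG: "continuous_on S (\<lambda>x. G (a x) (b x))" if "continuous_on S a" "continuous_on S b" for S and a b :: "'z::topological_space \<Rightarrow> complex"
    using continuous_on_compose2[OF cont, of S "\<lambda>x. (a x, b x)"] that
    by (auto intro!: continuous_intros)
  have contDs: "continuous_on UNIV Ds"
    unfolding Ds_def
    by (rule integral_continuous_on_param)
       (auto simp: split_beta E0 intro!: continuous_intros cG contE)
  have "(\<lambda>s. integral (cbox 0 1) (\<lambda>t. G s (E t) / E t)) holomorphic_on UNIV"
  proof (rule leibniz_rule_holomorphic[where fx="\<lambda>s t. Ds (s, E t) / E t"])
    fix s :: complex and t :: real
    have "((\<lambda>s. G s (E t)) has_field_derivative deriv (\<lambda>s. G s (E t)) s) (at s)"
      using h1 by (auto intro!: holomorphic_derivI)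
    then show "((\<lambda>s. G s (E t) / E t) has_field_derivative Ds (s, E t) / E t) (at s within UNIV)"
      unfolding Ds_eq by (auto simp: E0 intro!: derivative_eq_intros)
  next
    fix s :: complex
    show "(\<lambda>t. G s (E t) / E t) integrable_on cbox 0 1"
      by (rule integrable_continuous) (auto simp: E0 intro!: continuous_intros cG contE)
  next
    show "continuous_on (UNIV \<times> cbox 0 1) (\<lambda>(s, t). Ds (s, E t) / E t)"
    proof -
      have "continuous_on (UNIV \<times> cbox 0 1) (\<lambda>x::complex\<times>real. (fst x, E (snd x)))"
        by (intro continuous_intros contE)
      then have "continuous_on (UNIV \<times> cbox 0 1) (\<lambda>x::complex\<times>real. Ds (fst x, E (snd x)))"
        using continuous_on_compose2[OF contDs] by blast
      then show ?thesis
        by (auto simp: split_beta E0 intro!: continuous_intros contE)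
    qed
  qed auto
  moreover have "deriv (\<lambda>u. G s u) 0 = integral (cbox 0 1) (\<lambda>t. G s (E t) / E t)" for s
    using circ_deriv[OF h2[of s], of 0] by (simp add: E_def)
  ultimately show ?thesis by simp
qed

lemma pd_holo:
  assumes hs: "holomorphic_several g"
  shows "(\<lambda>s. pd g l (z + axis k s)) holomorphic_on UNIV"
proof -
  define G where "G = (\<lambda>s u. g (z + axis k s + axis l u))"
  have contg: "continuous_on UNIV g"
    by (rule continuous_at_imp_continuous_on)
       (use hs_pd[OF hs] in \<open>blast intro: has_derivative_continuous\<close>)
  have "continuous_on UNIV (\<lambda>p::complex\<times>complex. z + axis k (fst p) + axis l (snd p))"
    by (intro continuous_intros linear_continuous_on bounded_linear_compose[OF bounded_linear_axis]
        bounded_linear_fst bounded_linear_snd)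
  then have c: "continuous_on UNIV (\<lambda>p. G (fst p) (snd p))"
    unfolding G_def using continuous_on_compose2[OF contg] by blast
  have h1: "(\<lambda>s. G s u) holomorphic_on UNIV" for u
  proof -
    have "(\<lambda>s. G s u) = (\<lambda>s. g ((z + axis l u) + axis k s))"
      by (simp add: G_def add_ac)
    then show ?thesis using line_deriv[OF hs]
      by (auto simp: holomorphic_on_def field_differentiable_def)
  qed
  have h2: "(\<lambda>u. G s u) holomorphic_on UNIV" for s
    unfolding G_def using line_deriv[OF hs]
    by (auto simp: holomorphic_on_def field_differentiable_def)
  from osgood[OF c h1 h2] show ?thesis by (simp add: G_def pd_def)
qed

lemma wirt_line:
  assumes "((\<lambda>s. F (w + axis k s)) has_field_derivative D) (at 0)"
  shows "((\<lambda>t::real. F (w + t *\<^sub>R axis k 1)) has_vector_derivative D) (at 0)"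
    and "((\<lambda>t::real. F (w + t *\<^sub>R axis k \<i>)) has_vector_derivative (\<i> * D)) (at 0)"
proof -
  have e1: "t *\<^sub>R axis k 1 = axis k (complex_of_real t)" for t
    by (simp add: vec_eq_iff axis_def of_real_def)
  have e2: "t *\<^sub>R axis k \<i> = axis k (complex_of_real t * \<i>)" for t
    by (simp add: vec_eq_iff axis_def; simp add: scaleR_conv_of_real)
  have d1: "(complex_of_real has_vector_derivative 1) (at (0::real))"
    by (auto intro!: derivative_eq_intros)
  have d2: "((\<lambda>t::real. complex_of_real t * \<i>) has_vector_derivative \<i>) (at (0::real))"
    by (auto intro!: derivative_eq_intros)
  show "((\<lambda>t::real. F (w + t *\<^sub>R axis k 1)) has_vector_derivative D) (at 0)"
    using field_vector_diff_chain_at[OF d1, of "\<lambda>s. F (w + axis k s)" D] assms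
    by (simp add: e1 o_def)
  show "((\<lambda>t::real. F (w + t *\<^sub>R axis k \<i>)) has_vector_derivative (\<i> * D)) (at 0)"
    using field_vector_diff_chain_at[OF d2, of "\<lambda>s. F (w + axis k s)" D] assms
    by (simp add: e2 o_def)
qed

lemma wirt_sum:
  assumes J: "finite J"
    and a: "\<And>j. j \<in> J \<Longrightarrow> ((\<lambda>s. a j (w + axis k s)) has_field_derivative A j) (at 0)"
    and b: "\<And>j. j \<in> J \<Longrightarrow> ((\<lambda>s. b j (w + axis k s)) has_field_derivative B j) (at 0)"
  shows "wirt_z (\<lambda>v. \<Sum>j\<in>J. cnj (a j v) * b j v) k w = (\<Sum>j\<in>J. cnj (a j w) * B j)"
    and "wirt_zbar (\<lambda>v. \<Sum>j\<in>J. cnj (a j v) * b j v) k w = (\<Sum>j\<in>J. cnj (A j) * b j w)"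
proof -
  let ?F = "\<lambda>v. \<Sum>j\<in>J. cnj (a j v) * b j v"
  have "((\<lambda>t::real. ?F (w + t *\<^sub>R axis k 1)) has_vector_derivative
      (\<Sum>j\<in>J. cnj (a j (w + 0 *\<^sub>R axis k 1)) * B j + cnj (A j) * b j (w + 0 *\<^sub>R axis k 1))) (at 0)"
    by (intro has_vector_derivative_sum has_vector_derivative_mult has_vector_derivative_cnj
        wirt_line(1) a b)
  then have re: "partial_re ?F k w = (\<Sum>j\<in>J. cnj (a j w) * B j + cnj (A j) * b j w)"
    unfolding partial_re_def by (simp add: vector_derivative_at)
  have "((\<lambda>t::real. ?F (w + t *\<^sub>R axis k \<i>)) has_vector_derivative
      (\<Sum>j\<in>J. cnj (a j (w + 0 *\<^sub>R axis k \<i>)) * (\<i> * B j) + cnj (\<i> * A j) * b j (w + 0 *\<^sub>R axis k \<i>))) (at 0)"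
    by (intro has_vector_derivative_sum has_vector_derivative_mult has_vector_derivative_cnj
        wirt_line(2) a b)
  then have im: "partial_im ?F k w = (\<Sum>j\<in>J. cnj (a j w) * (\<i> * B j) + cnj (\<i> * A j) * b j w)"
    unfolding partial_im_def by (simp add: vector_derivative_at)
  show "wirt_z ?F k w = (\<Sum>j\<in>J. cnj (a j w) * B j)"
    unfolding wirt_z_def re im sum_distrib_left sum_subtractf[symmetric] sum_divide_distrib
    by (rule sum.cong) (simp_all add: algebra_simps)
  show "wirt_zbar ?F k w = (\<Sum>j\<in>J. cnj (A j) * b j w)"
    unfolding wirt_zbar_def re im sum_distrib_left sum.distrib[symmetric] sum_divide_distrib
    by (rule sum.cong) (simp_all add: algebra_simps)
qed

lemma euler:
  assumes hs: "holomorphic_several g"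
    and inv: "\<And>\<zeta> w. \<zeta> \<noteq> 0 \<Longrightarrow> g (torus_act A \<zeta> w) = g w"
  shows "(\<Sum>k\<in>UNIV. pd g k w * xi_vec A w $ k) = 0"
proof -
  define d where "d = (\<lambda>i. if i \<in> A then w $ i else - w $ i)"
  have t1: "torus_act A 1 w = w" by (simp add: torus_act_def vec_eq_iff)
  have dd: "((\<lambda>\<zeta>. torus_act A \<zeta> w $ i) has_field_derivative d i) (at 1)" for i
    unfolding torus_act_def d_def by (auto intro!: derivative_eq_intros simp: power2_eq_square)
  have "((\<lambda>\<zeta>. g (torus_act A \<zeta> w)) has_field_derivative (\<Sum>k\<in>UNIV. pd g k w * d k)) (at 1)"
    using chain_vec[where \<gamma>="\<lambda>\<zeta>. torus_act A \<zeta> w", OF hs_pd[OF hs] dd] by (simp add: t1)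
  then have "((\<lambda>\<zeta>. g w) has_field_derivative (\<Sum>k\<in>UNIV. pd g k w * d k)) (at 1)"
    by (rule has_field_derivative_transform_within_open[where S="-{0}"]) (auto simp: inv)
  moreover have "((\<lambda>\<zeta>. g w) has_field_derivative 0) (at 1)" by simp
  ultimately have "(\<Sum>k\<in>UNIV. pd g k w * d k) = 0" by (rule DERIV_unique)
  then show ?thesis by (simp add: d_def xi_vec_def)
qed

lemma det_zero_of_kernel:
  fixes H :: "complex^'n^'n"
  assumes "H *v x = 0" "x \<noteq> 0"
  shows "det H = 0"
proof (rule ccontr)
  assume "det H \<noteq> 0"
  then obtain B :: "complex^'n^'n" where "B ** H = mat 1"
    using invertible_det_nz invertible_left_inverse by blast
  then have "x = B *v (H *v x)" by (simp add: matrix_vector_mul_assoc)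
  with assms show False by simp
qed

theorem lemma7:
  fixes g :: "nat \<Rightarrow> complex^'n \<Rightarrow> complex" and m :: nat and A :: "'n set"
    and f :: "complex^'n \<Rightarrow> real" and z :: "complex^'n"
  assumes holo: "\<And>j. j \<in> {1..m} \<Longrightarrow> holomorphic_several (g j)"
    and inv: "\<And>j \<zeta> w. j \<in> {1..m} \<Longrightarrow> \<zeta> \<noteq> 0 \<Longrightarrow> g j (torus_act A \<zeta> w) = g j w"
    and f_def: "f = (\<lambda>w. \<Sum>j=1..m. (cmod (g j w))\<^sup>2)"
  shows "herm_inner (xi_vec A z) (wgrad_zbar (\<lambda>w. complex_of_real (f w)) z) = 0
     \<and> mixed_hessian (\<lambda>w. complex_of_real (f w)) z *v xi_vec A z = 0
     \<and> (xi_vec A z \<noteq> 0 \<longrightarrow> det (mixed_hessian (\<lambda>w. complex_of_real (f w)) z) = 0)"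
proof -
  let ?J = "{1..m::nat}"
  define Fc where "Fc = (\<lambda>w. complex_of_real (f w))"
  have Fc_eq: "Fc = (\<lambda>v. \<Sum>j\<in>?J. cnj (g j v) * g j v)"
    unfolding Fc_def f_def of_real_sum complex_norm_square by (simp add: mult.commute)
  have ld: "((\<lambda>s. g j (w + axis k s)) has_field_derivative pd (g j) k w) (at 0)" if "j \<in> ?J" for j w k
    using line_deriv[OF holo[OF that], of w k 0] by (simp add: axis_zero0)
  have wz: "wirt_z Fc l w = (\<Sum>j\<in>?J. cnj (g j w) * pd (g j) l w)" for l w
    unfolding Fc_eq by (rule wirt_sum(1)) (auto intro: ld)
  have wzb: "wirt_zbar Fc k w = (\<Sum>j\<in>?J. cnj (pd (g j) k w) * g j w)" for k w
    unfolding Fc_eq by (rule wirt_sum(2)) (auto intro: ld)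
  have pdd: "((\<lambda>s. pd (g j) l (z + axis k s)) has_field_derivative
        deriv (\<lambda>s. pd (g j) l (z + axis k s)) 0) (at 0)" if "j \<in> ?J" for j l k
    using pd_holo[OF holo[OF that], of l z k]
    by (auto simp: DERIV_deriv_iff_field_differentiable intro: holomorphic_on_imp_differentiable_at)
  have H: "mixed_hessian Fc z $ k $ l = (\<Sum>j\<in>?J. cnj (pd (g j) k z) * pd (g j) l z)" for k l
  proof -
    have "mixed_hessian Fc z $ k $ l = wirt_zbar (\<lambda>v. \<Sum>j\<in>?J. cnj (g j v) * pd (g j) l v) k z"
      by (simp add: mixed_hessian_def wz)
    also have "\<dots> = (\<Sum>j\<in>?J. cnj (pd (g j) k z) * pd (g j) l z)"
      by (rule wirt_sum(2)) (auto intro: ld pdd)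
    finally show ?thesis .
  qed
  have E: "(\<Sum>k\<in>UNIV. pd (g j) k w * xi_vec A w $ k) = 0" if "j \<in> ?J" for j w
    by (rule euler[OF holo[OF that]]) (rule inv[OF that])
  have P1: "herm_inner (xi_vec A z) (wgrad_zbar Fc z) = 0"
  proof -
    have "herm_inner (xi_vec A z) (wgrad_zbar Fc z)
        = (\<Sum>k\<in>UNIV. \<Sum>j\<in>?J. cnj (xi_vec A z $ k) * (cnj (pd (g j) k z) * g j z))"
      by (simp add: herm_inner_def wgrad_zbar_def wzb sum_distrib_left)
    also have "\<dots> = (\<Sum>j\<in>?J. g j z * cnj (\<Sum>k\<in>UNIV. pd (g j) k z * xi_vec A z $ k))"
      by (subst sum.swap) (simp add: sum_distrib_left mult_ac)
    also have "\<dots> = 0" using E by simp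
    finally show ?thesis .
  qed
  have P2: "mixed_hessian Fc z *v xi_vec A z = 0"
  proof -
    have "(mixed_hessian Fc z *v xi_vec A z) $ k = 0" for k
    proof -
      have "(mixed_hessian Fc z *v xi_vec A z) $ k
          = (\<Sum>l\<in>UNIV. \<Sum>j\<in>?J. cnj (pd (g j) k z) * pd (g j) l z * xi_vec A z $ l)"
        by (simp add: matrix_vector_mult_def H sum_distrib_right)
      also have "\<dots> = (\<Sum>j\<in>?J. cnj (pd (g j) k z) * (\<Sum>l\<in>UNIV. pd (g j) l z * xi_vec A z $ l))"
        by (subst sum.swap) (simp add: sum_distrib_left mult_ac)
      also have "\<dots> = 0" using E by simp
      finally show ?thesis .
    qed
    then show ?thesis by (simp add: vec_eq_iff)
  qed
  show ?thesis
    using P1 P2 det_zero_of_kernel[OF P2] unfolding Fc_def by blast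
qed

end
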